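(* Let $F,G\colon I\to\mathsf{Top}$ be diagrams of topological spaces and $\alpha\colon F\Rightarrow G$ a natural transformation such that each $\alpha_i\colon F(i)\to G(i)$ is a closed inclusion. Suppose that for each $i\in I$ the commutative square formed by $\alpha_i$, the colimit maps $\mu_i\colon F(i)\to\mathrm{colim}(F)$, $\nu_i\colon G(i)\to\mathrm{colim}(G)$ and the induced map $\alpha_*\colon\mathrm{colim}(F)\to\mathrm{colim}(G)$ is Cartesian in the category of sets (i.e. the canonical function from $F(i)$ to the set-theoretic pullback of $G(i)\to\mathrm{colim}(G)\leftarrow\mathrm{colim}(F)$ is a bijection). Then $\alpha_*$ is a closed inclusion. The same holds with "closed inclusion" replaced by "open inclusion" throughout. *)

theory Defs
  imports "HOL-Analysis.Analysis"
begin

record ('i, 'm) cat =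
  Obj :: "'i set"
  Arr :: "'m set"
  Dom :: "'m \<Rightarrow> 'i"
  Cod :: "'m \<Rightarrow> 'i"
  Idm :: "'i \<Rightarrow> 'm"
  Comp :: "'m \<Rightarrow> 'm \<Rightarrow> 'm"   (* Comp g f = g \<circ> f, defined when Cod f = Dom g *)

definition is_category :: "('i, 'm) cat \<Rightarrow> bool" where
  "is_category C \<longleftrightarrow>
     (\<forall>f\<in>Arr C. Dom C f \<in> Obj C \<and> Cod C f \<in> Obj C) \<and>
     (\<forall>i\<in>Obj C. Idm C i \<in> Arr C \<and> Dom C (Idm C i) = i \<and> Cod C (Idm C i) = i) \<and>
     (\<forall>f\<in>Arr C. \<forall>g\<in>Arr C. Cod C f = Dom C g \<longrightarrow>
        Comp C g f \<in> Arr C \<and> Dom C (Comp C g f) = Dom C f \<and> Cod C (Comp C g f) = Cod C g) \<and>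
     (\<forall>f\<in>Arr C. Comp C f (Idm C (Dom C f)) = f \<and> Comp C (Idm C (Cod C f)) f = f) \<and>
     (\<forall>f\<in>Arr C. \<forall>g\<in>Arr C. \<forall>h\<in>Arr C. Cod C f = Dom C g \<longrightarrow> Cod C g = Dom C h \<longrightarrow>
        Comp C h (Comp C g f) = Comp C (Comp C h g) f)"

text \<open>A diagram F : I \<rightarrow> Top is given by its object part F (spaces, all on a common
  ambient type) and its arrow part Fm (continuous maps).\<close>

definition top_diagram :: "('i, 'm) cat \<Rightarrow> ('i \<Rightarrow> 'a topology) \<Rightarrow> ('m \<Rightarrow> 'a \<Rightarrow> 'a) \<Rightarrow> bool" where
  "top_diagram C F Fm \<longleftrightarrow>
     is_category C \<and>
     (\<forall>f\<in>Arr C. continuous_map (F (Dom C f)) (F (Cod C f)) (Fm f)) \<and>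
     (\<forall>i\<in>Obj C. \<forall>x\<in>topspace (F i). Fm (Idm C i) x = x) \<and>
     (\<forall>f\<in>Arr C. \<forall>g\<in>Arr C. Cod C f = Dom C g \<longrightarrow>
        (\<forall>x\<in>topspace (F (Dom C f)). Fm (Comp C g f) x = Fm g (Fm f x)))"

definition nat_trans ::
  "('i, 'm) cat \<Rightarrow> ('i \<Rightarrow> 'a topology) \<Rightarrow> ('m \<Rightarrow> 'a \<Rightarrow> 'a)
     \<Rightarrow> ('i \<Rightarrow> 'b topology) \<Rightarrow> ('m \<Rightarrow> 'b \<Rightarrow> 'b) \<Rightarrow> ('i \<Rightarrow> 'a \<Rightarrow> 'b) \<Rightarrow> bool" where
  "nat_trans C F Fm G Gm \<alpha> \<longleftrightarrow>
     (\<forall>i\<in>Obj C. continuous_map (F i) (G i) (\<alpha> i)) \<and>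
     (\<forall>f\<in>Arr C. \<forall>x\<in>topspace (F (Dom C f)).
        \<alpha> (Cod C f) (Fm f x) = Gm f (\<alpha> (Dom C f) x))"

text \<open>Disjoint union of the spaces, modulo the equivalence relation generated by
  (i, x) ~ (j, F(f) x) for f : i \<rightarrow> j, with the quotient (final) topology.\<close>

definition colim_carrier0 :: "('i, 'm) cat \<Rightarrow> ('i \<Rightarrow> 'a topology) \<Rightarrow> ('i \<times> 'a) set" where
  "colim_carrier0 C F = Sigma (Obj C) (\<lambda>i. topspace (F i))"

definition colim_gen :: "('i, 'm) cat \<Rightarrow> ('i \<Rightarrow> 'a topology) \<Rightarrow> ('m \<Rightarrow> 'a \<Rightarrow> 'a) \<Rightarrow> (('i \<times> 'a) \<times> ('i \<times> 'a)) set" where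
  "colim_gen C F Fm = {((Dom C f, x), (Cod C f, Fm f x)) | f x. f \<in> Arr C \<and> x \<in> topspace (F (Dom C f))}"

definition colim_rel :: "('i, 'm) cat \<Rightarrow> ('i \<Rightarrow> 'a topology) \<Rightarrow> ('m \<Rightarrow> 'a \<Rightarrow> 'a) \<Rightarrow> (('i \<times> 'a) \<times> ('i \<times> 'a)) set" where
  "colim_rel C F Fm = (colim_gen C F Fm \<union> (colim_gen C F Fm)\<inverse>)\<^sup>*"

definition colim_inj :: "('i, 'm) cat \<Rightarrow> ('i \<Rightarrow> 'a topology) \<Rightarrow> ('m \<Rightarrow> 'a \<Rightarrow> 'a) \<Rightarrow> 'i \<Rightarrow> 'a \<Rightarrow> ('i \<times> 'a) set" where
  "colim_inj C F Fm i x = colim_rel C F Fm `` {(i, x)}"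

definition colim_set :: "('i, 'm) cat \<Rightarrow> ('i \<Rightarrow> 'a topology) \<Rightarrow> ('m \<Rightarrow> 'a \<Rightarrow> 'a) \<Rightarrow> ('i \<times> 'a) set set" where
  "colim_set C F Fm = (\<lambda>(i, x). colim_inj C F Fm i x) ` colim_carrier0 C F"

definition colim_top :: "('i, 'm) cat \<Rightarrow> ('i \<Rightarrow> 'a topology) \<Rightarrow> ('m \<Rightarrow> 'a \<Rightarrow> 'a) \<Rightarrow> ('i \<times> 'a) set topology" where
  "colim_top C F Fm = topology (\<lambda>U. U \<subseteq> colim_set C F Fm \<and>
     (\<forall>i\<in>Obj C. openin (F i) {x \<in> topspace (F i). colim_inj C F Fm i x \<in> U}))"

definition colim_map ::
  "('i, 'm) cat \<Rightarrow> ('i \<Rightarrow> 'b topology) \<Rightarrow> ('m \<Rightarrow> 'b \<Rightarrow> 'b) \<Rightarrow> ('i \<Rightarrow> 'a \<Rightarrow> 'b)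
     \<Rightarrow> ('i \<times> 'a) set \<Rightarrow> ('i \<times> 'b) set" where
  "colim_map C G Gm \<alpha> c = (let p = (SOME p. p \<in> c) in colim_inj C G Gm (fst p) (\<alpha> (fst p) (snd p)))"

definition closed_inclusion :: "'a topology \<Rightarrow> 'b topology \<Rightarrow> ('a \<Rightarrow> 'b) \<Rightarrow> bool" where
  "closed_inclusion X Y f \<longleftrightarrow> embedding_map X Y f \<and> closedin Y (f ` topspace X)"

definition open_inclusion :: "'a topology \<Rightarrow> 'b topology \<Rightarrow> ('a \<Rightarrow> 'b) \<Rightarrow> bool" where
  "open_inclusion X Y f \<longleftrightarrow> embedding_map X Y f \<and> openin Y (f ` topspace X)"

definition cartesian_square_set ::
  "'a set \<Rightarrow> 'b set \<Rightarrow> 'c set \<Rightarrow> ('a \<Rightarrow> 'b) \<Rightarrow> ('a \<Rightarrow> 'c) \<Rightarrow> ('b \<Rightarrow> 'd) \<Rightarrow> ('c \<Rightarrow> 'd) \<Rightarrow> bool" where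
  "cartesian_square_set A B C a m n g \<longleftrightarrow>
     bij_betw (\<lambda>x. (a x, m x)) A {(y, z). y \<in> B \<and> z \<in> C \<and> n y = g z}"

end

theory Submission
  imports Defs
begin

lemma colim_istop:
  "istopology (\<lambda>U. U \<subseteq> colim_set C F Fm \<and>
     (\<forall>i\<in>Obj C. openin (F i) {x \<in> topspace (F i). colim_inj C F Fm i x \<in> U}))"
proof -
  have 1: "S \<inter> T \<subseteq> colim_set C F Fm \<and> (\<forall>i\<in>Obj C. openin (F i) {x \<in> topspace (F i). colim_inj C F Fm i x \<in> S \<inter> T})"
    if S: "S \<subseteq> colim_set C F Fm \<and> (\<forall>i\<in>Obj C. openin (F i) {x \<in> topspace (F i). colim_inj C F Fm i x \<in> S})"
    and T: "T \<subseteq> colim_set C F Fm \<and> (\<forall>i\<in>Obj C. openin (F i) {x \<in> topspace (F i). colim_inj C F Fm i x \<in> T})"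
    for S T
  proof -
    have "openin (F i) {x \<in> topspace (F i). colim_inj C F Fm i x \<in> S \<inter> T}" if i: "i \<in> Obj C" for i
    proof -
      have "{x \<in> topspace (F i). colim_inj C F Fm i x \<in> S \<inter> T} =
        {x \<in> topspace (F i). colim_inj C F Fm i x \<in> S} \<inter> {x \<in> topspace (F i). colim_inj C F Fm i x \<in> T}" by auto
      then show ?thesis using S T i by (simp add: openin_Int)
    qed
    then show ?thesis using S by blast
  qed
  have 2: "\<Union>K \<subseteq> colim_set C F Fm \<and> (\<forall>i\<in>Obj C. openin (F i) {x \<in> topspace (F i). colim_inj C F Fm i x \<in> \<Union>K})"
    if K: "\<forall>U\<in>K. U \<subseteq> colim_set C F Fm \<and> (\<forall>i\<in>Obj C. openin (F i) {x \<in> topspace (F i). colim_inj C F Fm i x \<in> U})"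
    for K
  proof -
    have "openin (F i) {x \<in> topspace (F i). colim_inj C F Fm i x \<in> \<Union>K}" if i: "i \<in> Obj C" for i
    proof -
      have "{x \<in> topspace (F i). colim_inj C F Fm i x \<in> \<Union>K} =
        \<Union> ((\<lambda>U. {x \<in> topspace (F i). colim_inj C F Fm i x \<in> U}) ` K)" by auto
      then show ?thesis using K i by (auto intro!: openin_Union)
    qed
    then show ?thesis using K by blast
  qed
  show ?thesis unfolding istopology_def using 1 2 by blast
qed

lemma openin_colim:
  "openin (colim_top C F Fm) U \<longleftrightarrow> U \<subseteq> colim_set C F Fm \<and>
     (\<forall>i\<in>Obj C. openin (F i) {x \<in> topspace (F i). colim_inj C F Fm i x \<in> U})"
  unfolding colim_top_def by (subst topology_inverse'[OF colim_istop]) (rule refl)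

lemma mu_in:
  "i \<in> Obj C \<Longrightarrow> x \<in> topspace (F i) \<Longrightarrow> colim_inj C F Fm i x \<in> colim_set C F Fm"
  by (auto simp: colim_set_def colim_carrier0_def)

lemma topspace_colim: "topspace (colim_top C F Fm) = colim_set C F Fm"
proof -
  have "openin (colim_top C F Fm) (colim_set C F Fm)"
  proof -
    have "\<And>i. i \<in> Obj C \<Longrightarrow> {x \<in> topspace (F i). colim_inj C F Fm i x \<in> colim_set C F Fm} = topspace (F i)"
      by (auto simp: mu_in)
    then show ?thesis by (simp add: openin_colim)
  qed
  then have "colim_set C F Fm \<subseteq> topspace (colim_top C F Fm)" by (rule openin_subset)
  moreover have "topspace (colim_top C F Fm) \<subseteq> colim_set C F Fm"
    using openin_colim[of C F Fm "topspace (colim_top C F Fm)"] by simp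
  ultimately show ?thesis by blast
qed

lemma closedin_colim:
  "closedin (colim_top C F Fm) S \<longleftrightarrow> S \<subseteq> colim_set C F Fm \<and>
     (\<forall>i\<in>Obj C. closedin (F i) {x \<in> topspace (F i). colim_inj C F Fm i x \<in> S})"
proof -
  have eq: "\<And>i. i \<in> Obj C \<Longrightarrow> {x \<in> topspace (F i). colim_inj C F Fm i x \<in> colim_set C F Fm - S}
     = topspace (F i) - {x \<in> topspace (F i). colim_inj C F Fm i x \<in> S}"
    by (auto simp: mu_in)
  show ?thesis
  proof -
    have E: "(\<forall>i\<in>Obj C. openin (F i) {x \<in> topspace (F i). colim_inj C F Fm i x \<in> colim_set C F Fm - S})
      \<longleftrightarrow> (\<forall>i\<in>Obj C. openin (F i) (topspace (F i) - {x \<in> topspace (F i). colim_inj C F Fm i x \<in> S}))"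
      by (rule ball_cong[OF refl]) (simp only: eq)
    have "closedin (colim_top C F Fm) S \<longleftrightarrow> S \<subseteq> colim_set C F Fm \<and>
      (\<forall>i\<in>Obj C. openin (F i) {x \<in> topspace (F i). colim_inj C F Fm i x \<in> colim_set C F Fm - S})"
      unfolding closedin_def topspace_colim openin_colim by blast
    also have "\<dots> \<longleftrightarrow> S \<subseteq> colim_set C F Fm \<and>
     (\<forall>i\<in>Obj C. closedin (F i) {x \<in> topspace (F i). colim_inj C F Fm i x \<in> S})"
      unfolding E closedin_def by blast
    finally show ?thesis .
  qed
qed

lemma colim_equiv: "equiv UNIV (colim_rel C F Fm)"
  unfolding colim_rel_def equiv_def
  by (simp add: refl_rtrancl sym_rtrancl sym_Un_converse trans_rtrancl)

lemma rel_transport: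
  assumes td: "top_diagram C F Fm" and nt: "nat_trans C F Fm G Gm \<alpha>"
    and r: "(p, q) \<in> colim_rel C F Fm" and p: "p \<in> colim_carrier0 C F"
  shows "q \<in> colim_carrier0 C F \<and>
    ((fst p, \<alpha> (fst p) (snd p)), (fst q, \<alpha> (fst q) (snd q))) \<in> colim_rel C G Gm"
  using r p unfolding colim_rel_def
proof (induction rule: rtrancl_induct)
  case base then show ?case by simp
next
  case (step q r)
  have cat: "is_category C" using td by (simp add: top_diagram_def)
  have Fcont: "\<And>f. f \<in> Arr C \<Longrightarrow> continuous_map (F (Dom C f)) (F (Cod C f)) (Fm f)"
    using td by (simp add: top_diagram_def)
  have Fts: "\<And>f y. f \<in> Arr C \<Longrightarrow> y \<in> topspace (F (Dom C f)) \<Longrightarrow> Fm f y \<in> topspace (F (Cod C f))"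
    using Fcont by (meson continuous_map_image_subset_topspace image_subset_iff)
  have DC: "\<And>f. f \<in> Arr C \<Longrightarrow> Dom C f \<in> Obj C \<and> Cod C f \<in> Obj C"
    using cat by (simp add: is_category_def)
  have ats: "\<And>i y. i \<in> Obj C \<Longrightarrow> y \<in> topspace (F i) \<Longrightarrow> \<alpha> i y \<in> topspace (G i)"
    using nt unfolding nat_trans_def by (meson continuous_map_image_subset_topspace image_subset_iff)
  have nat: "\<And>f y. f \<in> Arr C \<Longrightarrow> y \<in> topspace (F (Dom C f)) \<Longrightarrow>
      \<alpha> (Cod C f) (Fm f y) = Gm f (\<alpha> (Dom C f) y)"
    using nt by (simp add: nat_trans_def)
  from step have qc: "q \<in> colim_carrier0 C F" by simp
  from step have IH: "((fst p, \<alpha> (fst p) (snd p)), (fst q, \<alpha> (fst q) (snd q))) \<in> colim_rel C G Gm"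
    by (simp add: colim_rel_def)
  from step.hyps(2) show ?case
  proof
    assume "(q, r) \<in> colim_gen C F Fm"
    then obtain f y where f: "f \<in> Arr C" "y \<in> topspace (F (Dom C f))"
      and q: "q = (Dom C f, y)" and r: "r = (Cod C f, Fm f y)"
      unfolding colim_gen_def by blast
    have rc: "r \<in> colim_carrier0 C F" using f r DC Fts by (simp add: colim_carrier0_def)
    have "((fst q, \<alpha> (fst q) (snd q)), (fst r, \<alpha> (fst r) (snd r))) \<in> colim_gen C G Gm"
      unfolding colim_gen_def using f q r nat ats DC by fastforce
    then have "((fst q, \<alpha> (fst q) (snd q)), (fst r, \<alpha> (fst r) (snd r))) \<in> colim_rel C G Gm"
      unfolding colim_rel_def by blast
    with IH rc show ?thesis unfolding colim_rel_def by (meson rtrancl_trans)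
  next
    assume "(q, r) \<in> (colim_gen C F Fm)\<inverse>"
    then obtain f y where f: "f \<in> Arr C" "y \<in> topspace (F (Dom C f))"
      and r: "r = (Dom C f, y)" and q: "q = (Cod C f, Fm f y)"
      unfolding colim_gen_def by blast
    have rc: "r \<in> colim_carrier0 C F" using f r DC by (simp add: colim_carrier0_def)
    have "((fst r, \<alpha> (fst r) (snd r)), (fst q, \<alpha> (fst q) (snd q))) \<in> colim_gen C G Gm"
      unfolding colim_gen_def using f q r nat ats DC by fastforce
    then have "((fst q, \<alpha> (fst q) (snd q)), (fst r, \<alpha> (fst r) (snd r))) \<in> colim_rel C G Gm"
      unfolding colim_rel_def by blast
    with IH rc show ?thesis unfolding colim_rel_def by (meson rtrancl_trans)
  qed
qed

lemma colim_map_inj: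
  assumes td: "top_diagram C F Fm" and nt: "nat_trans C F Fm G Gm \<alpha>"
    and i: "i \<in> Obj C" and x: "x \<in> topspace (F i)"
  shows "colim_map C G Gm \<alpha> (colim_inj C F Fm i x) = colim_inj C G Gm i (\<alpha> i x)"
proof -
  let ?c = "colim_inj C F Fm i x"
  define p where "p = (SOME p. p \<in> ?c)"
  have "(i, x) \<in> ?c" unfolding colim_inj_def colim_rel_def by simp
  hence "p \<in> ?c" unfolding p_def by (rule someI)
  hence pr: "((i, x), p) \<in> colim_rel C F Fm" unfolding colim_inj_def by auto
  have "((i, \<alpha> i x), (fst p, \<alpha> (fst p) (snd p))) \<in> colim_rel C G Gm"
    using rel_transport[OF td nt pr] i x by (simp add: colim_carrier0_def)
  hence "colim_inj C G Gm i (\<alpha> i x) = colim_inj C G Gm (fst p) (\<alpha> (fst p) (snd p))"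
    unfolding colim_inj_def by (rule equiv_class_eq[OF colim_equiv])
  thus ?thesis unfolding colim_map_def Let_def p_def[symmetric] by simp
qed

theorem lemma6p1:
  fixes C :: "('i, 'm) cat"
    and F :: "'i \<Rightarrow> 'a topology" and Fm :: "'m \<Rightarrow> 'a \<Rightarrow> 'a"
    and G :: "'i \<Rightarrow> 'b topology" and Gm :: "'m \<Rightarrow> 'b \<Rightarrow> 'b"
    and \<alpha> :: "'i \<Rightarrow> 'a \<Rightarrow> 'b"
  assumes "top_diagram C F Fm"
    and "top_diagram C G Gm"
    and "nat_trans C F Fm G Gm \<alpha>"
    and "\<forall>i\<in>Obj C. cartesian_square_set (topspace (F i)) (topspace (G i)) (colim_set C F Fm)
           (\<alpha> i) (colim_inj C F Fm i) (colim_inj C G Gm i) (colim_map C G Gm \<alpha>)"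
  shows "((\<forall>i\<in>Obj C. closed_inclusion (F i) (G i) (\<alpha> i)) \<longrightarrow>
            closed_inclusion (colim_top C F Fm) (colim_top C G Gm) (colim_map C G Gm \<alpha>))
       \<and> ((\<forall>i\<in>Obj C. open_inclusion (F i) (G i) (\<alpha> i)) \<longrightarrow>
            open_inclusion (colim_top C F Fm) (colim_top C G Gm) (colim_map C G Gm \<alpha>))"
proof -
  note A = assms
  let ?X = "colim_top C F Fm" and ?Y = "colim_top C G Gm" and ?\<phi> = "colim_map C G Gm \<alpha>"
  let ?\<mu> = "colim_inj C F Fm" and ?\<nu> = "colim_inj C G Gm"
  have phimu: "\<And>i x. i \<in> Obj C \<Longrightarrow> x \<in> topspace (F i) \<Longrightarrow> ?\<phi> (?\<mu> i x) = ?\<nu> i (\<alpha> i x)"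
    using colim_map_inj[OF A(1,3)] by blast
  have acont: "\<And>i. i \<in> Obj C \<Longrightarrow> continuous_map (F i) (G i) (\<alpha> i)"
    using A(3) unfolding nat_trans_def by blast
  have ats: "\<And>i x. i \<in> Obj C \<Longrightarrow> x \<in> topspace (F i) \<Longrightarrow> \<alpha> i x \<in> topspace (G i)"
    using acont by (meson continuous_map_image_subset_topspace image_subset_iff)
  have surj: "\<exists>x\<in>topspace (F i). \<alpha> i x = y \<and> ?\<mu> i x = c"
    if "i \<in> Obj C" "y \<in> topspace (G i)" "c \<in> colim_set C F Fm" "?\<nu> i y = ?\<phi> c" for i y c
  proof -
    have "(y, c) \<in> (\<lambda>x. (\<alpha> i x, ?\<mu> i x)) ` topspace (F i)"
      using A(4) that unfolding cartesian_square_set_def bij_betw_def by auto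
    thus ?thesis by auto
  qed
  have cases: "\<And>c. c \<in> colim_set C F Fm \<Longrightarrow> \<exists>i\<in>Obj C. \<exists>x\<in>topspace (F i). c = ?\<mu> i x"
    by (auto simp: colim_set_def colim_carrier0_def)
  have phi_ts: "?\<phi> c \<in> colim_set C G Gm" if cin: "c \<in> colim_set C F Fm" for c
  proof -
    obtain i x where "i \<in> Obj C" "x \<in> topspace (F i)" "c = ?\<mu> i x" using cases cin by blast
    thus ?thesis using phimu ats mu_in by metis
  qed
  have cont: "continuous_map ?X ?Y ?\<phi>"
    unfolding continuous_map_def topspace_colim
  proof (intro conjI allI impI)
    show "?\<phi> \<in> colim_set C F Fm \<rightarrow> colim_set C G Gm" using phi_ts by blast
    fix U assume U: "openin ?Y U"
    show "openin ?X {c \<in> colim_set C F Fm. ?\<phi> c \<in> U}"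
      unfolding openin_colim
    proof (intro conjI ballI)
      fix i assume i: "i \<in> Obj C"
      have e: "{x \<in> topspace (F i). ?\<mu> i x \<in> {c \<in> colim_set C F Fm. ?\<phi> c \<in> U}}
          = {x \<in> topspace (F i). \<alpha> i x \<in> {y \<in> topspace (G i). ?\<nu> i y \<in> U}}"
        using i phimu ats mu_in by auto
      have o: "openin (G i) {y \<in> topspace (G i). ?\<nu> i y \<in> U}"
        using U i unfolding openin_colim by blast
      show "openin (F i) {x \<in> topspace (F i). ?\<mu> i x \<in> {c \<in> colim_set C F Fm. ?\<phi> c \<in> U}}"
        unfolding e by (rule openin_continuous_map_preimage[OF acont[OF i] o])
    qed auto
  qed
  have injgen: "inj_on ?\<phi> (colim_set C F Fm)"
    if inj: "\<forall>i\<in>Obj C. inj_on (\<alpha> i) (topspace (F i))"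
  proof (rule inj_onI)
    fix c c' assume c: "c \<in> colim_set C F Fm" and c': "c' \<in> colim_set C F Fm" and eq: "?\<phi> c = ?\<phi> c'"
    obtain i x where ix: "i \<in> Obj C" "x \<in> topspace (F i)" "c = ?\<mu> i x" using cases c by blast
    have "?\<nu> i (\<alpha> i x) = ?\<phi> c'" using eq ix phimu by simp
    then obtain x' where x': "x' \<in> topspace (F i)" "\<alpha> i x' = \<alpha> i x" "?\<mu> i x' = c'"
      using surj[OF ix(1) ats[OF ix(1,2)] c'] by blast
    have "x' = x" using inj ix x' by (meson inj_onD)
    thus "c = c'" using ix x' by simp
  qed
  have pre: "{y \<in> topspace (G i). ?\<nu> i y \<in> ?\<phi> ` S} = \<alpha> i ` {x \<in> topspace (F i). ?\<mu> i x \<in> S}"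
    if S: "S \<subseteq> colim_set C F Fm" and i: "i \<in> Obj C" for S i
  proof
    show "{y \<in> topspace (G i). ?\<nu> i y \<in> ?\<phi> ` S} \<subseteq> \<alpha> i ` {x \<in> topspace (F i). ?\<mu> i x \<in> S}"
    proof
      fix y assume "y \<in> {y \<in> topspace (G i). ?\<nu> i y \<in> ?\<phi> ` S}"
      then obtain c where y: "y \<in> topspace (G i)" and c: "c \<in> S" "?\<nu> i y = ?\<phi> c" by auto
      then obtain x where "x \<in> topspace (F i)" "\<alpha> i x = y" "?\<mu> i x = c"
        using surj[OF i y] S by blast
      thus "y \<in> \<alpha> i ` {x \<in> topspace (F i). ?\<mu> i x \<in> S}" using c by auto
    qed
  next
    show "\<alpha> i ` {x \<in> topspace (F i). ?\<mu> i x \<in> S} \<subseteq> {y \<in> topspace (G i). ?\<nu> i y \<in> ?\<phi> ` S}"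
      using i ats phimu by (force intro: image_eqI[symmetric])
  qed
  have phiS: "?\<phi> ` S \<subseteq> colim_set C G Gm" if "S \<subseteq> colim_set C F Fm" for S
    using that phi_ts by blast
  show ?thesis
  proof (intro conjI impI)
    assume H: "\<forall>i\<in>Obj C. closed_inclusion (F i) (G i) (\<alpha> i)"
    have inj: "\<forall>i\<in>Obj C. inj_on (\<alpha> i) (topspace (F i))"
      using H unfolding closed_inclusion_def embedding_map_def
      by (meson homeomorphic_imp_injective_map)
    have cm: "\<And>i. i \<in> Obj C \<Longrightarrow> closed_map (F i) (G i) (\<alpha> i)"
      using H unfolding closed_inclusion_def by (meson embedding_imp_closed_map)
    have clm: "closed_map ?X ?Y ?\<phi>"
      unfolding closed_map_def
    proof (intro allI impI)
      fix S assume "closedin ?X S"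
      hence S: "S \<subseteq> colim_set C F Fm" "\<And>i. i \<in> Obj C \<Longrightarrow> closedin (F i) {x \<in> topspace (F i). ?\<mu> i x \<in> S}"
        unfolding closedin_colim by auto
      show "closedin ?Y (?\<phi> ` S)"
        unfolding closedin_colim
        using S phiS pre cm by (simp add: closed_map_def)
    qed
    show "closed_inclusion ?X ?Y ?\<phi>"
      unfolding closed_inclusion_def
    proof
      show "embedding_map ?X ?Y ?\<phi>"
        using injective_closed_imp_embedding_map[OF cont clm] injgen[OF inj] by (simp add: topspace_colim)
      show "closedin ?Y (?\<phi> ` topspace ?X)" using clm closedin_topspace closed_map_def by blast
    qed
  next
    assume H: "\<forall>i\<in>Obj C. open_inclusion (F i) (G i) (\<alpha> i)"
    have inj: "\<forall>i\<in>Obj C. inj_on (\<alpha> i) (topspace (F i))"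
      using H unfolding open_inclusion_def embedding_map_def
      by (meson homeomorphic_imp_injective_map)
    have om: "\<And>i. i \<in> Obj C \<Longrightarrow> open_map (F i) (G i) (\<alpha> i)"
      using H unfolding open_inclusion_def embedding_map_def
      by (meson homeomorphic_imp_open_map open_map_from_open_subtopology)
    have opm: "open_map ?X ?Y ?\<phi>"
      unfolding open_map_def
    proof (intro allI impI)
      fix S assume "openin ?X S"
      hence S: "S \<subseteq> colim_set C F Fm" "\<And>i. i \<in> Obj C \<Longrightarrow> openin (F i) {x \<in> topspace (F i). ?\<mu> i x \<in> S}"
        unfolding openin_colim by auto
      show "openin ?Y (?\<phi> ` S)"
        unfolding openin_colim
        using S phiS pre om by (simp add: open_map_def)
    qed
    show "open_inclusion ?X ?Y ?\<phi>"
      unfolding open_inclusion_def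
    proof
      show "embedding_map ?X ?Y ?\<phi>"
        using injective_open_imp_embedding_map[OF cont opm] injgen[OF inj] by (simp add: topspace_colim)
      show "openin ?Y (?\<phi> ` topspace ?X)" using opm openin_topspace open_map_def by blast
    qed
  qed
qed

end
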